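(* There is an absolute constant $C$ such that for every anticommuting family $e_1,\dots,e_k\in\mathbb{C}^{n\times n}$ we have $\sum_{i=1}^k \mathrm{rk}(e_i^2)\le Cn^2$.
   Context: A family $e_1,\dots,e_k$ of complex $n\times n$ matrices is called anticommuting if $e_ie_j=-e_je_i$ for all distinct $i,j\in\{1,\dots,k\}$. $\mathrm{rk}$ denotes matrix rank. *)

theory Defs
  imports "Jordan_Normal_Form.DL_Rank"
begin

(* The family e_1..e_k is represented as e 0, ..., e (k-1), each an n x n complex matrix. *)
definition anticommuting :: "nat \<Rightarrow> nat \<Rightarrow> (nat \<Rightarrow> complex mat) \<Rightarrow> bool" where
  "anticommuting n k e \<longleftrightarrow>
     (\<forall>i<k. e i \<in> carrier_mat n n) \<and>
     (\<forall>i<k. \<forall>j<k. i \<noteq> j \<longrightarrow> e i * e j = - (e j * e i))"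

end

theory Submission imports Defs begin

lemma generic_t:
  fixes c :: "nat \<Rightarrow> nat \<Rightarrow> complex"
  assumes fin: "finite I" and nz: "\<And>i. i \<in> I \<Longrightarrow> \<exists>r<n. c i r \<noteq> 0"
  shows "\<exists>t. \<forall>i\<in>I. (\<Sum>r<n. c i r * t ^ r) \<noteq> 0"
proof -
  define p where "p = (\<lambda>i. \<Sum>r<n. monom (c i r) r)"
  have pv: "poly (p i) t = (\<Sum>r<n. c i r * t ^ r)" for i t
    by (simp add: p_def poly_sum poly_monom)
  have pc: "coeff (p i) r = (if r < n then c i r else 0)" for i r
  proof -
    have "coeff (p i) r = (\<Sum>j<n. coeff (monom (c i j) j) r)" by (simp add: p_def coeff_sum)
    also have "\<dots> = (\<Sum>j<n. if j = r then c i j else 0)" by (rule sum.cong) (auto simp: coeff_monom)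
    also have "\<dots> = (if r < n then c i r else 0)" by (simp add: sum.delta)
    finally show ?thesis .
  qed
  have pnz: "p i \<noteq> 0" if iI: "i \<in> I" for i
  proof
    assume p0: "p i = 0"
    obtain r where r: "r < n" "c i r \<noteq> 0" using nz[OF iI] by blast
    have "coeff (p i) r = 0" using p0 by simp
    thus False using pc[of i r] r by simp
  qed
  have fU: "finite (\<Union>i\<in>I. {t. poly (p i) t = 0})"
    by (rule finite_UN_I[OF fin]) (use pnz poly_roots_finite in auto)
  obtain t where "t \<in> (UNIV::complex set)" "t \<notin> (\<Union>i\<in>I. {t. poly (p i) t = 0})"
    using ex_new_if_finite[OF infinite_UNIV_char_0 fU] by blast
  thus ?thesis using pv by auto
qed

lemma card_sum_ind: "card {q. q < (n::nat) \<and> P q} = (\<Sum>q<n. if P q then 1 else (0::nat))"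
proof -
  have "sum (\<lambda>_. 1::nat) {q\<in>{..<n}. P q} = (\<Sum>q<n. if P q then 1 else (0::nat))"
    by (rule sum.inter_filter) simp
  moreover have "{q\<in>{..<n}. P q} = {q. q < n \<and> P q}" by auto
  ultimately show ?thesis by (metis card_eq_sum)
qed

lemma wprod:
  fixes A :: "complex mat"
  assumes A: "A \<in> carrier_mat n n" and q: "q < n"
  shows "vec n (\<lambda>r. t ^ r) \<bullet> (A *\<^sub>v unit_vec n q) = (\<Sum>r<n. A $$ (r,q) * t ^ r)"
proof -
  have e: "(A *\<^sub>v unit_vec n q) $ r = A $$ (r,q)" if r: "r < n" for r
  proof -
    have "(A *\<^sub>v unit_vec n q) $ r = row A r \<bullet> unit_vec n q" using A r by simp
    also have "\<dots> = row A r $ q" using q by (rule scalar_prod_right_unit)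
    also have "\<dots> = A $$ (r,q)" using A r q by simp
    finally show ?thesis .
  qed
  have "vec n (\<lambda>r. t ^ r) \<bullet> (A *\<^sub>v unit_vec n q) = (\<Sum>r\<in>{0..<n}. vec n (\<lambda>r. t ^ r) $ r * (A *\<^sub>v unit_vec n q) $ r)"
    unfolding scalar_prod_def using A by simp
  also have "\<dots> = (\<Sum>r\<in>{0..<n}. A $$ (r,q) * t ^ r)"
    by (rule sum.cong) (auto simp: e)
  also have "\<dots> = (\<Sum>r<n. A $$ (r,q) * t ^ r)" by (simp add: lessThan_atLeast0)
  finally show ?thesis .
qed

lemma card_le_2n:
  fixes x y :: "nat \<Rightarrow> complex vec"
  assumes fin: "finite S"
  and dims: "\<And>i. i \<in> S \<Longrightarrow> x i \<in> carrier_vec n \<and> y i \<in> carrier_vec n"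
  and off: "\<And>i j. i \<in> S \<Longrightarrow> j \<in> S \<Longrightarrow> i \<noteq> j \<Longrightarrow> x i \<bullet> y j + y i \<bullet> x j = 0"
  and diag: "\<And>i. i \<in> S \<Longrightarrow> x i \<bullet> y i + y i \<bullet> x i \<noteq> 0"
  shows "card S \<le> 2 * n"
proof (rule ccontr)
  assume "\<not> card S \<le> 2 * n"
  define d where "d = card S"
  have dgt: "2 * n < d" using \<open>\<not> card S \<le> 2 * n\<close> d_def by simp
  define L where "L = sorted_list_of_set S"
  define f where "f = (\<lambda>s. L ! s)"
  have Ld: "distinct L" "set L = S" "length L = d" using fin by (auto simp: L_def d_def)
  have fS: "f s \<in> S" if "s < d" for s using Ld that by (auto simp: f_def)
  have finj: "f s = f t \<longleftrightarrow> s = t" if "s < d" "t < d" for s t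
    using Ld that by (simp add: f_def nth_eq_iff_index_eq)
  define P :: "complex mat" where "P = mat d d (\<lambda>(s,l). if l < n then x (f s) $ l else if l < 2*n then y (f s) $ (l - n) else 0)"
  define Q :: "complex mat" where "Q = mat d d (\<lambda>(l,t). if l < n then y (f t) $ l else if l < 2*n then x (f t) $ (l - n) else 0)"
  define D :: "complex mat" where "D = mat d d (\<lambda>(s,t). x (f s) \<bullet> y (f t) + y (f s) \<bullet> x (f t))"
  have P: "P \<in> carrier_mat d d" and Q: "Q \<in> carrier_mat d d" and D: "D \<in> carrier_mat d d"
    by (auto simp: P_def Q_def D_def)
  have PQ: "P * Q = D"
  proof (rule eq_matI)
    fix s t assume st: "s < dim_row D" "t < dim_col D"
    hence s: "s < d" and t: "t < d" using D by auto
    have dx: "dim_vec (x (f s)) = n" "dim_vec (y (f s)) = n" "dim_vec (x (f t)) = n" "dim_vec (y (f t)) = n"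
      using dims fS s t by auto
    have "(P * Q) $$ (s,t) = (\<Sum>l\<in>{0..<d}. P $$ (s,l) * Q $$ (l,t))"
      using P Q s t by (simp add: scalar_prod_def)
    also have "\<dots> = (\<Sum>l\<in>{0..<n}. P $$ (s,l) * Q $$ (l,t)) + (\<Sum>l\<in>{n..<2*n}. P $$ (s,l) * Q $$ (l,t))
        + (\<Sum>l\<in>{2*n..<d}. P $$ (s,l) * Q $$ (l,t))"
      using dgt by (simp add: sum.atLeastLessThan_concat)
    also have "(\<Sum>l\<in>{2*n..<d}. P $$ (s,l) * Q $$ (l,t)) = 0"
      by (rule sum.neutral) (auto simp: P_def s)
    also have "(\<Sum>l\<in>{0..<n}. P $$ (s,l) * Q $$ (l,t)) = x (f s) \<bullet> y (f t)"
      using s t dgt dx by (simp add: P_def Q_def scalar_prod_def)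
    also have "(\<Sum>l\<in>{n..<2*n}. P $$ (s,l) * Q $$ (l,t)) = (\<Sum>l\<in>{0..<n}. P $$ (s,l+n) * Q $$ (l+n,t))"
      using sum.shift_bounds_nat_ivl[of "\<lambda>l. P $$ (s,l) * Q $$ (l,t)" 0 n n] by (simp add: mult_2)
    also have "\<dots> = y (f s) \<bullet> x (f t)"
      using s t dgt dx by (simp add: P_def Q_def scalar_prod_def)
    finally show "(P * Q) $$ (s,t) = D $$ (s,t)" using s t by (simp add: D_def)
  qed (use P Q D in auto)
  have "det P = 0"
  proof -
    have "P *\<^sub>v unit_vec d (d - 1) = 0\<^sub>v d"
      by (rule eq_vecI) (use dgt P in \<open>auto simp: P_def row_def scalar_prod_right_unit\<close>)
    moreover have "unit_vec d (d - 1) \<noteq> (0\<^sub>v d :: complex vec)"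
      using dgt by (metis diff_less index_unit_vec(1) index_zero_vec(1) less_nat_zero_code linorder_neqE_nat one_neq_zero zero_less_one)
    ultimately show ?thesis using det_0_iff_vec_prod_zero[OF P] by (auto intro!: exI[of _ "unit_vec d (d-1)"])
  qed
  hence "det D = 0" using det_mult[OF P Q] PQ by simp
  then obtain v where v: "v \<in> carrier_vec d" "v \<noteq> 0\<^sub>v d" "D *\<^sub>v v = 0\<^sub>v d"
    using det_0_iff_vec_prod_zero[OF D] by auto
  have "v = 0\<^sub>v d"
  proof (rule eq_vecI)
    fix s assume "s < dim_vec (0\<^sub>v d :: complex vec)"
    hence s: "s < d" by simp
    have "(\<Sum>t\<in>{0..<d}. D $$ (s,t) * v $ t) = (D *\<^sub>v v) $ s"
      using s v(1) D by (auto simp: scalar_prod_def row_def)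
    also have "\<dots> = 0" using v(3) s by simp
    finally have sum0: "(\<Sum>t\<in>{0..<d}. D $$ (s,t) * v $ t) = 0" .
    have "(\<Sum>t\<in>{0..<d}. D $$ (s,t) * v $ t) = D $$ (s,s) * v $ s + (\<Sum>t\<in>{0..<d} - {s}. D $$ (s,t) * v $ t)"
      using s by (simp add: sum.remove)
    also have "(\<Sum>t\<in>{0..<d} - {s}. D $$ (s,t) * v $ t) = 0"
    proof (rule sum.neutral, rule ballI)
      fix t assume "t \<in> {0..<d} - {s}"
      hence t: "t < d" "t \<noteq> s" by auto
      hence "f s \<noteq> f t" using finj s by auto
      hence "D $$ (s,t) = 0" using off fS s t by (simp add: D_def)
      thus "D $$ (s,t) * v $ t = 0" by simp
    qed
    finally have "D $$ (s,s) * v $ s = 0" using sum0 by simp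
    moreover have "D $$ (s,s) \<noteq> 0" using diag fS s by (simp add: D_def)
    ultimately show "v $ s = 0\<^sub>v d $ s" using s by simp
  qed (use v in auto)
  thus False using v by simp
qed

context vec_space begin
lemma rank_le_nonzero_cols:
  assumes A: "A \<in> carrier_mat n n"
  shows "rank A \<le> card {q. q < n \<and> (\<exists>r<n. A $$ (r,q) \<noteq> 0)}"
proof -
  define Z where "Z = {q. q < n \<and> (\<exists>r<n. A $$ (r,q) \<noteq> 0)}"
  define B where "B = (\<lambda>m. mat n n (\<lambda>(r,c). if c < m then A $$ (r,c) else 0))"
  define C where "C = (\<lambda>m. mat n n (\<lambda>(r,c). if c = m then A $$ (r,c) else 0))"
  have BC: "B (Suc m) = B m + C m" for m
    by (rule eq_matI) (auto simp: B_def C_def)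
  have Cr: "rank (C m) \<le> (if m \<in> Z then 1 else 0)" for m
  proof (cases "m \<in> Z")
    case True
    have "rank (C m) \<le> 1"
      by (rule rank_le_1_product_entries[of _ n "\<lambda>r. A $$ (r,m)" "\<lambda>c. if c = m then 1 else 0"])
         (auto simp: C_def)
    thus ?thesis using True by simp
  next
    case False
    have "C m = 0\<^sub>m n n"
      by (rule eq_matI) (use False in \<open>auto simp: C_def Z_def\<close>)
    thus ?thesis using rank_0I by simp
  qed
  have Bm: "rank (B m) \<le> card (Z \<inter> {..<m})" for m
  proof (induction m)
    case 0
    have "B 0 = 0\<^sub>m n n" by (rule eq_matI) (auto simp: B_def)
    thus ?case using rank_0I by simp
  next
    case (Suc m)
    have "rank (B (Suc m)) \<le> rank (B m) + rank (C m)"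
      unfolding BC by (rule rank_subadditive) (auto simp: B_def C_def)
    also have "\<dots> \<le> card (Z \<inter> {..<m}) + (if m \<in> Z then 1 else 0)"
      using Suc Cr[of m] by simp
    also have "\<dots> = card (Z \<inter> {..<Suc m})"
    proof (cases "m \<in> Z")
      case True
      have "Z \<inter> {..<Suc m} = insert m (Z \<inter> {..<m})" using True by auto
      thus ?thesis using True by simp
    next
      case False
      have "Z \<inter> {..<Suc m} = Z \<inter> {..<m}" using False less_Suc_eq by auto
      thus ?thesis using False by simp
    qed
    finally show ?case .
  qed
  moreover have "B n = A" by (rule eq_matI) (use A in \<open>auto simp: B_def\<close>)
  moreover have "Z \<inter> {..<n} = Z" by (auto simp: Z_def)
  ultimately have "rank A \<le> card Z" using Bm[of n] by simp
  thus ?thesis unfolding Z_def .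
qed
end
theorem mainTheorem3:
  "\<exists>C::real. \<forall>(n::nat) (k::nat) (e::nat \<Rightarrow> complex mat).
     anticommuting n k e \<longrightarrow>
     real (\<Sum>i<k. vec_space.rank n (e i * e i)) \<le> C * real n ^ 2"
proof (intro exI[of _ 2] allI impI)
  fix n k :: nat and e :: "nat \<Rightarrow> complex mat"
  assume H: "anticommuting n k e"
  have car: "\<And>i. i < k \<Longrightarrow> e i \<in> carrier_mat n n"
    and ac: "\<And>i j. i < k \<Longrightarrow> j < k \<Longrightarrow> i \<noteq> j \<Longrightarrow> e i * e j = - (e j * e i)"
    using H unfolding anticommuting_def by blast+
  define a where "a = (\<lambda>i. e i * e i)"
  have acar: "a i \<in> carrier_mat n n" if "i < k" for i
    unfolding a_def by (rule mult_carrier_mat[OF car[OF that] car[OF that]])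
  define P where "P = (\<lambda>i q. \<exists>r<n. a i $$ (r,q) \<noteq> 0)"
  have r1: "vec_space.rank n (a i) \<le> card {q. q < n \<and> P i q}" if "i < k" for i
    unfolding P_def by (rule vec_space.rank_le_nonzero_cols[OF acar[OF that]])
  have c2: "card {i. i < k \<and> P i q} \<le> 2 * n" if q: "q < n" for q
  proof -
    define I where "I = {i. i < k \<and> P i q}"
    have finI: "finite I" unfolding I_def by simp
    have nzI: "\<exists>r<n. a i $$ (r,q) \<noteq> 0" if "i \<in> I" for i
      using that unfolding I_def P_def by simp
    obtain t where t: "\<forall>i\<in>I. (\<Sum>r<n. a i $$ (r,q) * t ^ r) \<noteq> 0"
      using generic_t[where I=I and c="\<lambda>i r. a i $$ (r,q)" and n=n, OF finI nzI] by blast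
    define w :: "complex vec" where "w = vec n (\<lambda>r. t ^ r)"
    define u :: "complex vec" where "u = unit_vec n q"
    have w: "w \<in> carrier_vec n" and u: "u \<in> carrier_vec n" by (simp_all add: w_def u_def)
    define x where "x = (\<lambda>i. transpose_mat (e i) *\<^sub>v w)"
    define y where "y = (\<lambda>i. e i *\<^sub>v u)"
    have xy: "x i \<in> carrier_vec n \<and> y i \<in> carrier_vec n" if "i < k" for i
      unfolding x_def y_def using car[OF that] w u by simp
    have g: "x i \<bullet> y j = w \<bullet> ((e i * e j) *\<^sub>v u)" if "i < k" "j < k" for i j
    proof -
      have "x i \<bullet> y j = w \<bullet> (e i *\<^sub>v (e j *\<^sub>v u))"
        unfolding x_def y_def
        by (rule transpose_vec_mult_scalar[OF car[OF that(1)] _ w]) (use car[OF that(2)] u in auto)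
      also have "\<dots> = w \<bullet> ((e i * e j) *\<^sub>v u)"
        using car[OF that(1)] car[OF that(2)] u by simp
      finally show ?thesis .
    qed
    have g2: "y i \<bullet> x j = x j \<bullet> y i" if "i < k" "j < k" for i j
      using comm_scalar_prod[of "y i" n "x j"] xy[OF that(1)] xy[OF that(2)] by blast
    have "card I \<le> 2 * n"
    proof (rule card_le_2n[where S=I and x=x and y=y and n=n])
      show "finite I" by (simp add: I_def)
      show "x i \<in> carrier_vec n \<and> y i \<in> carrier_vec n" if "i \<in> I" for i
        using xy that by (simp add: I_def)
      show "x i \<bullet> y j + y i \<bullet> x j = 0" if "i \<in> I" "j \<in> I" "i \<noteq> j" for i j
      proof -
        have ij: "i < k" "j < k" using that by (auto simp: I_def)
        have "x i \<bullet> y j + y i \<bullet> x j = w \<bullet> ((e i * e j) *\<^sub>v u) + w \<bullet> ((e j * e i) *\<^sub>v u)"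
          using g[OF ij] g[OF ij(2) ij(1)] g2[OF ij] by simp
        also have "(e i * e j) *\<^sub>v u = - ((e j * e i) *\<^sub>v u)"
          using ac[OF ij that(3)] car[OF ij(1)] car[OF ij(2)] u by simp
        also have "w \<bullet> (- ((e j * e i) *\<^sub>v u)) = - (w \<bullet> ((e j * e i) *\<^sub>v u))"
          using car[OF ij(1)] car[OF ij(2)] u w by (simp add: scalar_prod_uminus_right)
        finally show ?thesis by simp
      qed
      show "x i \<bullet> y i + y i \<bullet> x i \<noteq> 0" if "i \<in> I" for i
      proof -
        have ik: "i < k" using that by (simp add: I_def)
        have "x i \<bullet> y i + y i \<bullet> x i = 2 * (w \<bullet> (a i *\<^sub>v u))"
          using g[OF ik ik] g2[OF ik ik] by (simp add: a_def)
        also have "w \<bullet> (a i *\<^sub>v u) = (\<Sum>r<n. a i $$ (r,q) * t ^ r)"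
          unfolding w_def u_def by (rule wprod[OF acar[OF ik] q])
        finally show ?thesis using t that by simp
      qed
    qed
    thus ?thesis by (simp add: I_def)
  qed
  have "(\<Sum>i<k. vec_space.rank n (e i * e i)) \<le> (\<Sum>i<k. card {q. q < n \<and> P i q})"
    by (rule sum_mono) (use r1 in \<open>simp add: a_def\<close>)
  also have "\<dots> = (\<Sum>i<k. \<Sum>q<n. if P i q then 1 else 0)"
    by (rule sum.cong[OF refl card_sum_ind])
  also have "\<dots> = (\<Sum>q<n. \<Sum>i<k. if P i q then 1 else 0)"
    by (rule sum.swap)
  also have "\<dots> = (\<Sum>q<n. card {i. i < k \<and> P i q})"
    by (rule sum.cong[OF refl card_sum_ind[symmetric]])
  also have "\<dots> \<le> (\<Sum>q<n. 2 * n)"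
    by (rule sum_mono) (use c2 in simp)
  also have "\<dots> = 2 * n * n" by simp
  finally have "real (\<Sum>i<k. vec_space.rank n (e i * e i)) \<le> real (2 * n * n)"
    by (simp only: of_nat_le_iff)
  thus "real (\<Sum>i<k. vec_space.rank n (e i * e i)) \<le> 2 * real n ^ 2"
    by (simp add: power2_eq_square)
qed

end
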